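(* Let $(n_i)_{i\ge1}$ be positive integers and let $(k^{(E)}_i)$, $(k^{(F)}_i)$ be sequences of positive integers such that $\lim_{i\to\infty}\prod_{j\ge0}\frac{n_{i+j}}{n_{i+j}+k^{(E)}_{i+j}}=1$, $\lim_{i\to\infty}\prod_{j\ge0}\frac{n_{i+j}}{n_{i+j}+k^{(F)}_{i+j}}=1$, $\prod_{i\ge1}(n_i+k^{(E)}_i)=\prod_{i\ge1}(n_i+k^{(F)}_i)$ as supernatural numbers, and $\lim_{i\to\infty}\frac{(n_1+k^{(E)}_1)\cdots(n_i+k^{(E)}_i)}{(n_1+k^{(F)}_1)\cdots(n_i+k^{(F)}_i)}=1$. Then $(k^{(E)}_i)$ and $(k^{(F)}_i)$ are sufficiently close.
   Context: Definition (sufficiently close). Sequences $(k^{(E)}_i)$ and $(k^{(F)}_i)$ (relative to $(n_i)$) are sufficiently close if for every $\delta>0$ and every $N$: (i) there exist $i_1>i'_1\ge N$ such that $1-\prod_{j\ge0}\frac{n_{i'_1+j}}{n_{i'_1+j}+k^{(E)}_{i'_1+j}}<\delta$, $\prod_{i=1}^{i'_1-1}(n_i+k^{(E)}_i)$ divides $\prod_{i=1}^{i_1-1}(n_i+k^{(F)}_i)$, and $$\frac{(n_1+k^{(F)}_1)\cdots(n_{i'_1-1}+k^{(F)}_{i'_1-1})}{(n_1+k^{(E)}_1)\cdots(n_{i'_1-1}+k^{(E)}_{i'_1-1})}\cdot\frac{(n_{i'_1}+k^{(F)}_{i'_1})\cdots(n_{i_1-1}+k^{(F)}_{i_1-1})}{n_{i'_1}\cdots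 n_{i_1-1}}>1;$$ and (ii) the same holds with the roles of $E$ and $F$ interchanged (for some $i_2>i'_2\ge N$). *)

theory Defs
  imports Complex_Main "HOL-Computational_Algebra.Primes" "HOL-Library.Extended_Nat"
begin

text \<open>Tail infinite product  prod_{j>=0} n_(i+j) / (n_(i+j) + k_(i+j)), taken as the
  limit of the partial products (these are decreasing and positive, so the limit exists,
  possibly 0).\<close>
definition tailprod :: "(nat \<Rightarrow> nat) \<Rightarrow> (nat \<Rightarrow> nat) \<Rightarrow> nat \<Rightarrow> real" where
  "tailprod n k i = lim (\<lambda>m. \<Prod>j<m. real (n (i+j)) / real (n (i+j) + k (i+j)))"

text \<open>Exponent of the prime p in the supernatural number prod_{i>=1} a_i.\<close>
definition supnat_exp :: "(nat \<Rightarrow> nat) \<Rightarrow> nat \<Rightarrow> enat" where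
  "supnat_exp a p = (SUP N. enat (\<Sum>i\<in>{1..N}. multiplicity p (a i)))"

definition supnat_eq :: "(nat \<Rightarrow> nat) \<Rightarrow> (nat \<Rightarrow> nat) \<Rightarrow> bool" where
  "supnat_eq a b \<longleftrightarrow> (\<forall>p. prime p \<longrightarrow> supnat_exp a p = supnat_exp b p)"

definition suff_close_half :: "(nat \<Rightarrow> nat) \<Rightarrow> (nat \<Rightarrow> nat) \<Rightarrow> (nat \<Rightarrow> nat) \<Rightarrow> bool" where
  "suff_close_half n kE kF \<longleftrightarrow>
     (\<forall>\<delta>>0. \<forall>N\<ge>1. \<exists>i1 i1'. i1 > i1' \<and> i1' \<ge> N \<and>
        1 - tailprod n kE i1' < \<delta> \<and>
        (\<Prod>i\<in>{1..<i1'}. n i + kE i) dvd (\<Prod>i\<in>{1..<i1}. n i + kF i) \<and>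
        (\<Prod>i\<in>{1..<i1'}. real (n i + kF i)) / (\<Prod>i\<in>{1..<i1'}. real (n i + kE i)) *
        ((\<Prod>i\<in>{i1'..<i1}. real (n i + kF i)) / (\<Prod>i\<in>{i1'..<i1}. real (n i))) > 1)"

definition sufficiently_close :: "(nat \<Rightarrow> nat) \<Rightarrow> (nat \<Rightarrow> nat) \<Rightarrow> (nat \<Rightarrow> nat) \<Rightarrow> bool" where
  "sufficiently_close n kE kF \<longleftrightarrow> suff_close_half n kE kF \<and> suff_close_half n kF kE"

end

theory Submission
  imports Defs
begin

lemma enat_le_SUP_ex:
  fixes f :: "nat \<Rightarrow> nat"
  assumes "enat s \<le> (SUP N. enat (f N))"
  shows "\<exists>N. s \<le> f N"
proof (rule ccontr)
  assume "\<not> ?thesis"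
  hence h: "\<And>N. f N < s" by (simp add: not_le)
  hence "s > 0" by (metis gr_zeroI not_less0)
  have h2: "\<And>N. f N \<le> s - 1" using h by (metis Suc_pred' \<open>s > 0\<close> less_Suc_eq_le)
  have "(SUP N. enat (f N)) \<le> enat (s - 1)"
    by (rule SUP_least) (use h2 in \<open>simp\<close>)
  with assms have "enat s \<le> enat (s - 1)" by order
  with \<open>s > 0\<close> show False by simp
qed

lemma dvd_eventually:
  fixes n kE kF :: "nat \<Rightarrow> nat"
  assumes pos: "\<forall>i\<ge>1. n i > 0"
    and eq: "supnat_eq (\<lambda>i. n i + kE i) (\<lambda>i. n i + kF i)"
    and i': "i' \<ge> 1"
  shows "eventually (\<lambda>M. (\<Prod>i\<in>{1..<i'}. n i + kE i) dvd (\<Prod>i\<in>{1..M}. n i + kF i)) sequentially"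
proof -
  define A where "A = (\<Prod>i\<in>{1..<i'}. n i + kE i)"
  have A0: "A \<noteq> 0" unfolding A_def using pos by auto
  have evp: "eventually (\<lambda>M. multiplicity p A \<le> multiplicity p (\<Prod>i\<in>{1..M}. n i + kF i)) sequentially"
    if p: "prime p" for p
  proof -
    have mA: "multiplicity p A = (\<Sum>i\<in>{1..<i'}. multiplicity p (n i + kE i))"
      unfolding A_def using p pos
      by (subst prime_elem_multiplicity_prod_distrib) auto
    have "{1..<i'} = {1..i'-1}" using i' by auto
    hence "enat (multiplicity p A) \<le> supnat_exp (\<lambda>i. n i + kE i) p"
      unfolding supnat_exp_def mA by (auto intro: SUP_upper)
    also have "\<dots> = supnat_exp (\<lambda>i. n i + kF i) p" using eq p unfolding supnat_eq_def by blast
    finally have "enat (multiplicity p A) \<le> (SUP N. enat (\<Sum>i\<in>{1..N}. multiplicity p (n i + kF i)))"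
      unfolding supnat_exp_def .
    from enat_le_SUP_ex[OF this] obtain N where N: "multiplicity p A \<le> (\<Sum>i\<in>{1..N}. multiplicity p (n i + kF i))"
      by blast
    show ?thesis unfolding eventually_sequentially
    proof (intro exI allI impI)
      fix M assume "N \<le> M"
      have "(\<Sum>i\<in>{1..N}. multiplicity p (n i + kF i)) \<le> (\<Sum>i\<in>{1..M}. multiplicity p (n i + kF i))"
        by (rule sum_mono2) (use \<open>N \<le> M\<close> in auto)
      also have "\<dots> = multiplicity p (\<Prod>i\<in>{1..M}. n i + kF i)"
        using p pos by (subst prime_elem_multiplicity_prod_distrib) auto
      finally show "multiplicity p A \<le> multiplicity p (\<Prod>i\<in>{1..M}. n i + kF i)" using N by linarith
    qed
  qed
  have "eventually (\<lambda>M. \<forall>p\<in>prime_factors A. multiplicity p A \<le> multiplicity p (\<Prod>i\<in>{1..M}. n i + kF i)) sequentially"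
    by (intro eventually_ball_finite ballI evp) (simp_all add: in_prime_factors_iff)
  thus ?thesis
  proof (rule eventually_mono)
    fix M assume H: "\<forall>p\<in>prime_factors A. multiplicity p A \<le> multiplicity p (\<Prod>i\<in>{1..M}. n i + kF i)"
    show "(\<Prod>i\<in>{1..<i'}. n i + kE i) dvd (\<Prod>i\<in>{1..M}. n i + kF i)"
      unfolding A_def[symmetric]
    proof (rule multiplicity_le_imp_dvd[OF A0])
      fix p :: nat assume "prime p"
      show "multiplicity p A \<le> multiplicity p (\<Prod>i\<in>{1..M}. n i + kF i)"
      proof (cases "p \<in> prime_factors A")
        case True thus ?thesis using H by blast
      next
        case False
        hence "multiplicity p A = 0" using \<open>prime p\<close> unfolding prime_factors_multiplicity by auto
        thus ?thesis by simp
      qed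
    qed
  qed
qed

lemma half:
  fixes n kE kF :: "nat \<Rightarrow> nat"
  assumes pos: "\<forall>i\<ge>1. n i > 0" and kpos: "\<forall>i\<ge>1. kE i > 0"
    and tp: "(\<lambda>i. tailprod n kE i) \<longlonglongrightarrow> 1"
    and eq: "supnat_eq (\<lambda>i. n i + kE i) (\<lambda>i. n i + kF i)"
    and rat: "(\<lambda>i. (\<Prod>j\<in>{1..i}. real (n j + kF j)) / (\<Prod>j\<in>{1..i}. real (n j + kE j))) \<longlonglongrightarrow> 1"
  shows "suff_close_half n kE kF"
  unfolding suff_close_half_def
proof (intro allI impI)
  fix \<delta> :: real and N :: nat
  assume d: "\<delta> > 0" and N: "N \<ge> 1"
  from tp d have "eventually (\<lambda>i. dist (tailprod n kE i) 1 < \<delta>) sequentially"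
    by (rule tendstoD)
  then obtain i0 where i0: "\<And>i. i \<ge> i0 \<Longrightarrow> dist (tailprod n kE i) 1 < \<delta>"
    unfolding eventually_sequentially by blast
  define i' where "i' = max i0 N"
  have i'N: "i' \<ge> N" and i'1: "i' \<ge> 1" using N unfolding i'_def by auto
  have tpi: "1 - tailprod n kE i' < \<delta>" using i0[of i'] unfolding i'_def dist_real_def by auto
  define c where "c = real (n i' + kE i') / real (n i')"
  have c1: "c > 1" unfolding c_def using pos kpos i'1 by auto
  have "1 / c < 1" using c1 by simp
  from order_tendstoD(1)[OF rat this]
  have ev2: "eventually (\<lambda>M. 1 / c < (\<Prod>j\<in>{1..M}. real (n j + kF j)) / (\<Prod>j\<in>{1..M}. real (n j + kE j))) sequentially" .
  have "eventually (\<lambda>M. (\<Prod>i\<in>{1..<i'}. n i + kE i) dvd (\<Prod>i\<in>{1..M}. n i + kF i) \<and>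
     1 / c < (\<Prod>j\<in>{1..M}. real (n j + kF j)) / (\<Prod>j\<in>{1..M}. real (n j + kE j)) \<and> i' \<le> M) sequentially"
    by (intro eventually_conj dvd_eventually[OF pos eq i'1] ev2 eventually_ge_at_top)
  then obtain M where Mdvd: "(\<Prod>i\<in>{1..<i'}. n i + kE i) dvd (\<Prod>i\<in>{1..M}. n i + kF i)"
    and Mr: "1 / c < (\<Prod>j\<in>{1..M}. real (n j + kF j)) / (\<Prod>j\<in>{1..M}. real (n j + kE j))"
    and Mi: "i' \<le> M"
    using eventually_sequentially by (metis (no_types, lifting) order.refl)
  have split: "{1..M} = {1..<Suc M}" by auto
  define B' where "B' = (\<Prod>i\<in>{1..<i'}. real (n i + kF i))"
  define A' where "A' = (\<Prod>i\<in>{1..<i'}. real (n i + kE i))"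
  define Bt where "Bt = (\<Prod>i\<in>{i'..<Suc M}. real (n i + kF i))"
  define At where "At = (\<Prod>i\<in>{i'..<Suc M}. real (n i + kE i))"
  define Nt where "Nt = (\<Prod>i\<in>{i'..<Suc M}. real (n i))"
  have BM: "(\<Prod>j\<in>{1..M}. real (n j + kF j)) = B' * Bt"
    unfolding split B'_def Bt_def using i'1 Mi by (simp add: prod.atLeastLessThan_concat)
  have AM: "(\<Prod>j\<in>{1..M}. real (n j + kE j)) = A' * At"
    unfolding split A'_def At_def using i'1 Mi by (simp add: prod.atLeastLessThan_concat)
  have A'0: "A' > 0" unfolding A'_def by (intro prod_pos) (use pos in force)
  have posr: "\<And>a. a \<in> {i'..<Suc M} \<Longrightarrow> n a > 0" using pos i'1 by auto
  have At0: "At > 0" unfolding At_def by (intro prod_pos) (simp add: posr add_pos_nonneg)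
  have Nt0: "Nt > 0" unfolding Nt_def by (intro prod_pos) (simp add: posr)
  have QM: "At / Nt = (\<Prod>i\<in>{i'..<Suc M}. real (n i + kE i) / real (n i))"
    unfolding At_def Nt_def by (simp add: prod_dividef)
  also have "\<dots> = c * (\<Prod>i\<in>{Suc i'..<Suc M}. real (n i + kE i) / real (n i))"
    unfolding c_def using Mi by (intro prod.atLeast_Suc_lessThan) simp
  also have "\<dots> \<ge> c * 1"
  proof (rule mult_left_mono)
    show "1 \<le> (\<Prod>i\<in>{Suc i'..<Suc M}. real (n i + kE i) / real (n i))"
      using pos i'1 by (intro prod_ge_1) auto
  qed (use c1 in auto)
  finally have Qc: "At / Nt \<ge> c" by simp
  have "1 = (1 / c) * c" using c1 by simp
  also have "\<dots> < (B' * Bt) / (A' * At) * c"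
    using Mr BM AM c1 by (intro mult_strict_right_mono) auto
  also have "\<dots> \<le> (B' * Bt) / (A' * At) * (At / Nt)"
    using Qc A'0 At0 by (intro mult_left_mono) (auto intro!: divide_nonneg_pos mult_nonneg_nonneg
        simp: B'_def Bt_def prod_nonneg)
  also have "\<dots> = B' / A' * (Bt / Nt)" using At0 Nt0 A'0 by (simp add: field_simps)
  finally have gt: "B' / A' * (Bt / Nt) > 1" .
  show "\<exists>i1 i1'. i1 > i1' \<and> i1' \<ge> N \<and>
        1 - tailprod n kE i1' < \<delta> \<and>
        (\<Prod>i\<in>{1..<i1'}. n i + kE i) dvd (\<Prod>i\<in>{1..<i1}. n i + kF i) \<and>
        (\<Prod>i\<in>{1..<i1'}. real (n i + kF i)) / (\<Prod>i\<in>{1..<i1'}. real (n i + kE i)) *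
        ((\<Prod>i\<in>{i1'..<i1}. real (n i + kF i)) / (\<Prod>i\<in>{i1'..<i1}. real (n i))) > 1"
  proof (intro exI conjI)
    show "Suc M > i'" using Mi by simp
    show "(\<Prod>i\<in>{1..<i'}. n i + kE i) dvd (\<Prod>i\<in>{1..<Suc M}. n i + kF i)"
      using Mdvd split by simp
    show "(\<Prod>i\<in>{1..<i'}. real (n i + kF i)) / (\<Prod>i\<in>{1..<i'}. real (n i + kE i)) *
        ((\<Prod>i\<in>{i'..<Suc M}. real (n i + kF i)) / (\<Prod>i\<in>{i'..<Suc M}. real (n i))) > 1"
      using gt unfolding B'_def A'_def Bt_def Nt_def .
  qed (use i'N tpi in auto)
qed

theorem lemma4p8:
  fixes n kE kF :: "nat \<Rightarrow> nat"
  assumes "\<forall>i\<ge>1. n i > 0" and "\<forall>i\<ge>1. kE i > 0" and "\<forall>i\<ge>1. kF i > 0"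
    and "(\<lambda>i. tailprod n kE i) \<longlonglongrightarrow> 1"
    and "(\<lambda>i. tailprod n kF i) \<longlonglongrightarrow> 1"
    and "supnat_eq (\<lambda>i. n i + kE i) (\<lambda>i. n i + kF i)"
    and "(\<lambda>i. (\<Prod>j\<in>{1..i}. real (n j + kE j)) / (\<Prod>j\<in>{1..i}. real (n j + kF j))) \<longlonglongrightarrow> 1"
  shows "sufficiently_close n kE kF"
proof -
  have inv: "(\<lambda>i. (\<Prod>j\<in>{1..i}. real (n j + kF j)) / (\<Prod>j\<in>{1..i}. real (n j + kE j))) \<longlonglongrightarrow> 1"
    using tendsto_inverse[OF assms(7)] by (simp add: inverse_divide)
  have eq2: "supnat_eq (\<lambda>i. n i + kF i) (\<lambda>i. n i + kE i)"
    using assms(6) unfolding supnat_eq_def by metis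
  show ?thesis unfolding sufficiently_close_def
    using half[OF assms(1,2,4,6) inv] half[OF assms(1,3,5) eq2 assms(7)] by blast
qed

end
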